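(* Let $f:\mathbb{R}^p\to\mathbb{R}$ be convex and differentiable with Lipschitz gradient, and for each $j\in[p]=\{1,\dots,p\}$ let $g_j:\mathbb{R}\to\mathbb{R}\cup\{+\infty\}$ be proper, closed and convex. Set $g(x)=\sum_{j=1}^p g_j(x_j)$ and $\Phi=f+g$. Assume $\arg\min_{x\in\mathbb{R}^p}\Phi(x)\neq\emptyset$, and that every minimizer $x^\star$ of $\Phi$ satisfies the non-degeneracy condition $-\nabla f(x^\star)\in\operatorname{ri}(\partial g(x^\star))$. Fix a minimizer $x^\star$ and let $\mathcal{S}=\mathcal{S}_{x^\star}$ be its generalized support. Assume that for all $j\in\mathcal{S}$, $g_j$ is $\mathcal{C}^2$ on a neighbourhood of $x^\star_j$, and that $f$ is $\mathcal{C}^2$ on a neighbourhood of $x^\star$. Let $(x^{(k)})_{k\ge 0}$ be the sequence generated by cyclic proximal coordinate descent with step sizes $0<\gamma_j\le 1/L_j$, and assume $x^{(k)}\to x^\star$. Then there exists $K>0$ such that for all $k\ge K$, $x^{(k)}_{\mathcal{S}^c}=x^\star_{\mathcal{S}^c}$.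
   Context: $\operatorname{ri}$ denotes relative interior and $\partial$ the convex subdifferential. $L_j$ is the coordinatewise Lipschitz constant of $\nabla_j f$: $|\nabla_j f(x+he_j)-\nabla_j f(x)|\le L_j|h|$ for all $x\in\mathbb{R}^p,h\in\mathbb{R}$. The generalized support of $x$ is $\mathcal{S}_x=\{j\in[p]:\partial g_j(x_j)\text{ is a singleton}\}$, and $\mathcal{S}^c=[p]\setminus\mathcal{S}$. For a convex $h$ and $\gamma>0$, $\operatorname{prox}_{\gamma h}(v)=\arg\min_y \frac{1}{2\gamma}\|v-y\|^2+h(y)$. Cyclic proximal coordinate descent: given $x^{(0)}\in\mathbb{R}^p$, for each $k\ge0$ set $x^{(0,k)}=x^{(k)}$; for $j=1,\dots,p$, set $x^{(j,k)}=x^{(j-1,k)}$ and then replace its $j$-th coordinate by $\operatorname{prox}_{\gamma_j g_j}\big(x^{(j-1,k)}_j-\gamma_j\nabla_j f(x^{(j-1,k)})\big)$; finally $x^{(k+1)}=x^{(p,k)}$. *)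

theory Defs
  imports "HOL-Analysis.Analysis"
begin

definition proper_fun :: "('a \<Rightarrow> ereal) \<Rightarrow> bool" where
  "proper_fun h \<longleftrightarrow> (\<forall>x. h x \<noteq> -\<infinity>) \<and> (\<exists>x. h x \<noteq> \<infinity>)"

definition convex_fun :: "('a::real_vector \<Rightarrow> ereal) \<Rightarrow> bool" where
  "convex_fun h \<longleftrightarrow> (\<forall>x y (t::real). 0 < t \<and> t < 1 \<longrightarrow>
      h (t *\<^sub>R x + (1 - t) *\<^sub>R y) \<le> ereal t * h x + ereal (1 - t) * h y)"

definition closed_fun :: "('a::topological_space \<Rightarrow> ereal) \<Rightarrow> bool" where
  "closed_fun h \<longleftrightarrow> closed {(x, t::real). h x \<le> ereal t}"

definition subdiff :: "('a::real_inner \<Rightarrow> ereal) \<Rightarrow> 'a \<Rightarrow> 'a set" where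
  "subdiff h x = {v. h x \<noteq> \<infinity> \<and> (\<forall>y. h y \<ge> h x + ereal (v \<bullet> (y - x)))}"

definition sep_sum :: "('n::finite \<Rightarrow> real \<Rightarrow> ereal) \<Rightarrow> real^'n \<Rightarrow> ereal" where
  "sep_sum G x = (\<Sum>j\<in>UNIV. G j (x $ j))"

definition prox :: "real \<Rightarrow> (real \<Rightarrow> ereal) \<Rightarrow> real \<Rightarrow> real" where
  "prox \<gamma> h v = (THE y. \<forall>z. ereal (1 / (2 * \<gamma>) * (v - y)\<^sup>2) + h y
                              \<le> ereal (1 / (2 * \<gamma>) * (v - z)\<^sup>2) + h z)"

definition gen_support :: "('n::finite \<Rightarrow> real \<Rightarrow> ereal) \<Rightarrow> real^'n \<Rightarrow> 'n set" where
  "gen_support G x = {j. \<exists>v. subdiff (G j) (x $ j) = {v}}"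

definition cd_update ::
  "(real^'n \<Rightarrow> real^'n) \<Rightarrow> ('n::finite \<Rightarrow> real) \<Rightarrow> ('n \<Rightarrow> real \<Rightarrow> ereal) \<Rightarrow> 'n \<Rightarrow> real^'n \<Rightarrow> real^'n" where
  "cd_update gradf \<gamma> G j x =
     (\<chi> i. if i = j then prox (\<gamma> j) (G j) (x $ j - \<gamma> j * gradf x $ j) else x $ i)"

definition cd_sweep ::
  "((real,'n) vec \<Rightarrow> (real,'n) vec) \<Rightarrow> ('n::{finite,linorder} \<Rightarrow> real) \<Rightarrow> ('n \<Rightarrow> real \<Rightarrow> ereal) \<Rightarrow> (real,'n) vec \<Rightarrow> (real,'n) vec" where
  "cd_sweep gradf \<gamma> G x = fold (cd_update gradf \<gamma> G) (sorted_list_of_set UNIV) x"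

end

theory Submission
  imports Defs
begin

lemma cd_update_nth: "cd_update gradf \<gamma> G j x $ i = (if i = j then prox (\<gamma> j) (G j) (x $ j - \<gamma> j * gradf x $ j) else x $ i)"
  by (simp add: cd_update_def)

lemma fold_keep: "i \<notin> set l \<Longrightarrow> fold (cd_update gradf \<gamma> G) l x $ i = x $ i"
  by (induction l arbitrary: x) (auto simp: cd_update_nth)

lemma fold_state:
  assumes "distinct l" "j \<in> set l"
  shows "\<exists>z. (\<forall>i. z $ i = x $ i \<or> z $ i = fold (cd_update gradf \<gamma> G) l x $ i) \<and>
     fold (cd_update gradf \<gamma> G) l x $ j = cd_update gradf \<gamma> G j z $ j"
  using assms
proof (induction l arbitrary: x)
  case Nil then show ?case by simp
next
  case (Cons a l)
  show ?case
  proof (cases "j = a")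
    case True
    then show ?thesis using Cons.prems by (intro exI[of _ x]) (auto simp: fold_keep)
  next
    case False
    then have "j \<in> set l" using Cons.prems by auto
    from Cons.IH[OF _ this, of "cd_update gradf \<gamma> G a x"] Cons.prems obtain z where
      z: "\<forall>i. z $ i = cd_update gradf \<gamma> G a x $ i \<or> z $ i = fold (cd_update gradf \<gamma> G) l (cd_update gradf \<gamma> G a x) $ i"
        "fold (cd_update gradf \<gamma> G) l (cd_update gradf \<gamma> G a x) $ j = cd_update gradf \<gamma> G j z $ j" by auto
    have "\<forall>i. z $ i = x $ i \<or> z $ i = fold (cd_update gradf \<gamma> G) (a # l) x $ i"
    proof
      fix i
      show "z $ i = x $ i \<or> z $ i = fold (cd_update gradf \<gamma> G) (a # l) x $ i"
        using z(1)[rule_format, of i] Cons.prems fold_keep[of a l gradf \<gamma> G "cd_update gradf \<gamma> G a x"]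
        by (cases "i = a") (auto simp: cd_update_nth)
    qed
    then show ?thesis using z(2) by auto
  qed
qed

lemma subdiff_proj:
  assumes minf: "\<And>i t. G i t \<noteq> -\<infinity>" and v: "v \<in> subdiff (sep_sum G) x"
  shows "v $ j \<in> subdiff (G j) (x $ j)" "\<And>i. G i (x $ i) \<noteq> \<infinity>"
proof -
  have fin: "sep_sum G x \<noteq> \<infinity>" and ineq: "\<And>y. sep_sum G y \<ge> sep_sum G x + ereal (v \<bullet> (y - x))"
    using v by (auto simp: subdiff_def)
  show nf: "\<And>i. G i (x $ i) \<noteq> \<infinity>" using fin by (auto simp: sep_sum_def sum_Pinfty)
  define r where "r i = real_of_ereal (G i (x $ i))" for i
  have r: "G i (x $ i) = ereal (r i)" for i using nf[of i] minf[of i "x $ i"] unfolding r_def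
    by (cases "G i (x $ i)") auto
  define R where "R = (\<Sum>i\<in>UNIV - {j}. r i)"
  have split: "sep_sum G y = G j (y $ j) + (\<Sum>i\<in>UNIV - {j}. G i (y $ i))" for y
    unfolding sep_sum_def by (simp add: sum.remove)
  have "G j z \<ge> G j (x $ j) + ereal (v $ j * (z - x $ j))" for z
  proof -
    define y where "y = x + (z - x $ j) *\<^sub>R axis j 1"
    have yj: "y $ j = z" and yi: "\<And>i. i \<noteq> j \<Longrightarrow> y $ i = x $ i" by (auto simp: y_def axis_def)
    have "(\<Sum>i\<in>UNIV - {j}. G i (y $ i)) = ereal R"
      unfolding R_def by (simp add: yi r)
    moreover have "sep_sum G x = ereal (r j) + ereal R"
      unfolding split R_def by (simp add: r)
    moreover have "v \<bullet> (y - x) = v $ j * (z - x $ j)"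
      by (simp add: y_def inner_axis)
    ultimately have "G j z + ereal R \<ge> ereal (r j) + ereal R + ereal (v $ j * (z - x $ j))"
      using ineq[of y] split[of y] yj by simp
    then show ?thesis using minf[of j z] r[of j] by (cases "G j z") auto
  qed
  then show "v $ j \<in> subdiff (G j) (x $ j)" using nf[of j] by (auto simp: subdiff_def)
qed

lemma subdiff_lift:
  assumes "\<And>i. w $ i \<in> subdiff (G i) (x $ i)"
  shows "w \<in> subdiff (sep_sum G) x"
proof -
  have nf: "G i (x $ i) \<noteq> \<infinity>" for i using assms[of i] by (auto simp: subdiff_def)
  have "sep_sum G y \<ge> sep_sum G x + ereal (w \<bullet> (y - x))" for y
  proof -
    have "sep_sum G x + ereal (w \<bullet> (y - x)) = (\<Sum>i\<in>UNIV. G i (x $ i) + ereal (w $ i * (y $ i - x $ i)))"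
      by (simp add: sum.distrib sep_sum_def inner_vec_def)
    also have "\<dots> \<le> sep_sum G y"
      unfolding sep_sum_def using assms by (intro sum_mono) (auto simp: subdiff_def)
    finally show ?thesis .
  qed
  moreover have "sep_sum G x \<noteq> \<infinity>" using nf by (auto simp: sep_sum_def sum_Pinfty)
  ultimately show ?thesis by (auto simp: subdiff_def)
qed

lemma prox_eq:
  assumes g: "\<gamma> > 0" and minf: "\<And>t. h t \<noteq> -\<infinity>" and sd: "(v - a) / \<gamma> \<in> subdiff h a"
  shows "prox \<gamma> h v = a"
proof -
  define w where "w = (v - a) / \<gamma>"
  define F where "F z = ereal (1 / (2 * \<gamma>) * (v - z)\<^sup>2) + h z" for z
  have ha: "h a \<noteq> \<infinity>" and sub: "\<And>z. h z \<ge> h a + ereal (w * (z - a))"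
    using sd by (auto simp: subdiff_def w_def)
  obtain ra where ra: "h a = ereal ra" using ha minf[of a] by (cases "h a") auto
  have strict: "F a < F z" if "z \<noteq> a" for z
  proof (cases "h z")
    case (real rz)
    have rz: "rz \<ge> ra + w * (z - a)" using sub[of z] real ra by simp
    have "1 / (2 * \<gamma>) * (v - z)\<^sup>2 = 1 / (2 * \<gamma>) * (v - a)\<^sup>2 - w * (z - a) + 1 / (2 * \<gamma>) * (z - a)\<^sup>2"
      using g by (simp add: w_def field_simps power2_eq_square)
    moreover have "1 / (2 * \<gamma>) * (z - a)\<^sup>2 > 0" using g that by simp
    ultimately show ?thesis using rz by (simp add: F_def real ra)
  next
    case PInf then show ?thesis by (simp add: F_def ra)
  next
    case MInf then show ?thesis using minf by simp
  qed
  have min: "\<forall>z. F a \<le> F z" using strict by (metis order.order_iff_strict)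
  show ?thesis unfolding prox_def
  proof (rule the_equality)
    show "\<forall>z. ereal (1 / (2 * \<gamma>) * (v - a)\<^sup>2) + h a \<le> ereal (1 / (2 * \<gamma>) * (v - z)\<^sup>2) + h z"
      using min by (simp add: F_def)
  next
    fix y assume "\<forall>z. ereal (1 / (2 * \<gamma>) * (v - y)\<^sup>2) + h y \<le> ereal (1 / (2 * \<gamma>) * (v - z)\<^sup>2) + h z"
    then have "F y \<le> F a" by (simp add: F_def)
    then show "y = a" using strict[of y] by (metis not_le)
  qed
qed

lemma ri_interval:
  assumes minf: "\<And>i t. G i t \<noteq> -\<infinity>"
    and u: "u \<in> rel_interior (subdiff (sep_sum G) x)"
    and j: "\<not> (\<exists>c. subdiff (G j) (x $ j) = {c})"
  shows "\<exists>e>0. \<forall>r. \<bar>r - u $ j\<bar> < e \<longrightarrow> r \<in> subdiff (G j) (x $ j)"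
proof -
  let ?P = "subdiff (sep_sum G) x"
  have uP: "u \<in> ?P" using u rel_interior_subset by blast
  obtain e where e: "e > 0" "ball u e \<inter> affine hull ?P \<subseteq> ?P"
    using u by (auto simp: mem_rel_interior_ball)
  have uj: "u $ j \<in> subdiff (G j) (x $ j)" using subdiff_proj[OF minf uP] by blast
  then obtain c where c: "c \<in> subdiff (G j) (x $ j)" "c \<noteq> u $ j" using j by blast
  define w where "w = u + (c - u $ j) *\<^sub>R axis j 1"
  have "w $ i \<in> subdiff (G i) (x $ i)" for i
    using c subdiff_proj(1)[OF minf uP, of i] by (cases "i = j") (auto simp: w_def axis_def)
  then have wP: "w \<in> ?P" by (rule subdiff_lift)
  have "r \<in> subdiff (G j) (x $ j)" if r: "\<bar>r - u $ j\<bar> < e" for r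
  proof -
    define s where "s = (r - u $ j) / (c - u $ j)"
    define p where "p = (1 - s) *\<^sub>R u + s *\<^sub>R w"
    have pe: "p = u + (r - u $ j) *\<^sub>R axis j 1"
    proof -
      have "p = u + (s * (c - u $ j)) *\<^sub>R axis j 1" by (simp add: p_def w_def algebra_simps)
      moreover have "s * (c - u $ j) = r - u $ j" using c(2) by (simp add: s_def)
      ultimately show ?thesis by simp
    qed
    have "p \<in> affine hull ?P"
      using affine_affine_hull[of ?P] hull_inc[OF uP] hull_inc[OF wP] unfolding p_def affine_def
      by auto
    moreover have "p \<in> ball u e" using r by (simp add: pe dist_norm)
    ultimately have "p \<in> ?P" using e by blast
    from subdiff_proj(1)[OF minf this, of j] show ?thesis by (simp add: pe)
  qed
  then show ?thesis using e(1) by blast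
qed

theorem theorem1:
  fixes f :: "(real,'n::{finite,linorder}) vec \<Rightarrow> real"
    and gradf :: "(real,'n) vec \<Rightarrow> (real,'n) vec"
    and G :: "'n \<Rightarrow> real \<Rightarrow> ereal"
    and L \<gamma> :: "'n \<Rightarrow> real"
    and xstar :: "(real,'n) vec"
    and xs :: "nat \<Rightarrow> (real,'n) vec"
  assumes f_convex: "convex_on UNIV f"
    and f_grad: "\<And>x. (f has_derivative (\<lambda>h. gradf x \<bullet> h)) (at x)"
    and f_lip: "\<exists>M. \<forall>x y. norm (gradf x - gradf y) \<le> M * norm (x - y)"
    and G_proper: "\<And>j. proper_fun (G j)"
    and G_closed: "\<And>j. closed_fun (G j)"
    and G_convex: "\<And>j. convex_fun (G j)"
    and argmin_ne: "\<exists>x. \<forall>y. ereal (f x) + sep_sum G x \<le> ereal (f y) + sep_sum G y"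
    and nondegen: "\<And>x. (\<forall>y. ereal (f x) + sep_sum G x \<le> ereal (f y) + sep_sum G y) \<Longrightarrow>
                     - gradf x \<in> rel_interior (subdiff (sep_sum G) x)"
    and xstar_min: "\<forall>y. ereal (f xstar) + sep_sum G xstar \<le> ereal (f y) + sep_sum G y"
    and G_C2: "\<And>j. j \<in> gen_support G xstar \<Longrightarrow>
                 \<exists>U h h' h''. open U \<and> xstar $ j \<in> U \<and> continuous_on U h'' \<and>
                   (\<forall>t\<in>U. G j t = ereal (h t) \<and> (h has_real_derivative h' t) (at t)
                           \<and> (h' has_real_derivative h'' t) (at t))"
    and f_C2: "\<exists>U H. open U \<and> xstar \<in> U \<and> continuous_on U H \<and>
                 (\<forall>x\<in>U. (gradf has_derivative blinfun_apply (H x)) (at x))"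
    and L_pos: "\<And>j. L j > 0"
    and L_lip: "\<And>j x h. \<bar>gradf (x + h *\<^sub>R axis j 1) $ j - gradf x $ j\<bar> \<le> L j * \<bar>h\<bar>"
    and step: "\<And>j. 0 < \<gamma> j \<and> \<gamma> j \<le> 1 / L j"
    and iter: "\<And>k. xs (Suc k) = cd_sweep gradf \<gamma> G (xs k)"
    and conv: "xs \<longlonglongrightarrow> xstar"
  shows "\<exists>K>0. \<forall>k\<ge>K. \<forall>j\<in>- gen_support G xstar. xs k $ j = xstar $ j"
proof -
  have minf: "\<And>i t. G i t \<noteq> -\<infinity>" using G_proper by (simp add: proper_fun_def)
  define u where "u = - gradf xstar"
  have uri: "u \<in> rel_interior (subdiff (sep_sum G) xstar)" using nondegen[OF xstar_min] by (simp add: u_def)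
  obtain M where M: "\<And>x y. norm (gradf x - gradf y) \<le> M * norm (x - y)" using f_lip by blast
  define l where "l = sorted_list_of_set (UNIV :: 'n set)"
  have l: "distinct l" "set l = UNIV" by (simp_all add: l_def)
  have xsS: "xs (Suc k) = fold (cd_update gradf \<gamma> G) l (xs k)" for k
    by (simp add: iter cd_sweep_def l_def)
  have ev: "eventually (\<lambda>k. xs (Suc k) $ j = xstar $ j) sequentially" if jS: "j \<in> - gen_support G xstar" for j
  proof -
    have nj: "\<not> (\<exists>c. subdiff (G j) (xstar $ j) = {c})" using jS by (simp add: gen_support_def)
    obtain e where e: "e > 0" "\<And>r. \<bar>r - u $ j\<bar> < e \<Longrightarrow> r \<in> subdiff (G j) (xstar $ j)"
      using ri_interval[OF minf uri nj] by blast
    have "\<forall>k. \<exists>z. (\<forall>i. z $ i = xs k $ i \<or> z $ i = xs (Suc k) $ i) \<and>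
        xs (Suc k) $ j = cd_update gradf \<gamma> G j z $ j"
      using fold_state[OF l(1), of j] l(2) xsS by simp
    then have "\<exists>Z. \<forall>k. (\<forall>i. Z k $ i = xs k $ i \<or> Z k $ i = xs (Suc k) $ i) \<and>
        xs (Suc k) $ j = cd_update gradf \<gamma> G j (Z k) $ j" by (rule choice)
    then obtain Z where Z0: "\<forall>k. (\<forall>i. Z k $ i = xs k $ i \<or> Z k $ i = xs (Suc k) $ i) \<and>
        xs (Suc k) $ j = cd_update gradf \<gamma> G j (Z k) $ j" by blast
    have Z: "\<And>k i. Z k $ i = xs k $ i \<or> Z k $ i = xs (Suc k) $ i"
      "\<And>k. xs (Suc k) $ j = cd_update gradf \<gamma> G j (Z k) $ j" using Z0 by blast+
    have convS: "(\<lambda>k. xs (Suc k)) \<longlonglongrightarrow> xstar" using conv by (rule LIMSEQ_Suc)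
    have Zlim: "Z \<longlonglongrightarrow> xstar"
    proof (rule vec_tendstoI)
      fix i
      define d where "d k = \<bar>xs k $ i - xstar $ i\<bar> + \<bar>xs (Suc k) $ i - xstar $ i\<bar>" for k
      have d0: "d \<longlonglongrightarrow> 0"
      proof -
        have "d \<longlonglongrightarrow> \<bar>xstar $ i - xstar $ i\<bar> + \<bar>xstar $ i - xstar $ i\<bar>"
          unfolding d_def by (intro tendsto_intros conv convS)
        then show ?thesis by simp
      qed
      have lo: "(\<lambda>k. xstar $ i - d k) \<longlonglongrightarrow> xstar $ i" using tendsto_diff[OF tendsto_const d0] by simp
      have hi: "(\<lambda>k. xstar $ i + d k) \<longlonglongrightarrow> xstar $ i" using tendsto_add[OF tendsto_const d0] by simp
      show "(\<lambda>k. Z k $ i) \<longlonglongrightarrow> xstar $ i"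
      proof (rule tendsto_sandwich[OF _ _ lo hi])
        show "\<forall>\<^sub>F k in sequentially. xstar $ i - d k \<le> Z k $ i"
          using Z(1) by (intro always_eventually allI) (smt (verit) d_def)
        show "\<forall>\<^sub>F k in sequentially. Z k $ i \<le> xstar $ i + d k"
          using Z(1) by (intro always_eventually allI) (smt (verit) d_def)
      qed
    qed
    have glim: "(\<lambda>k. gradf (Z k)) \<longlonglongrightarrow> gradf xstar"
    proof -
      have "(\<lambda>k. M * norm (Z k - xstar)) \<longlonglongrightarrow> M * norm (xstar - xstar)"
        by (intro tendsto_intros Zlim)
      then have "(\<lambda>k. M * norm (Z k - xstar)) \<longlonglongrightarrow> 0" by simp
      then have "(\<lambda>k. gradf (Z k) - gradf xstar) \<longlonglongrightarrow> 0"
        by (rule Lim_null_comparison[rotated]) (simp add: M)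
      then show ?thesis by (rule LIM_zero_cancel)
    qed
    have gp: "\<gamma> j > 0" using step by blast
    define E where "E k = (Z k $ j - xstar $ j) / \<gamma> j - gradf (Z k) $ j" for k
    have "E \<longlonglongrightarrow> (xstar $ j - xstar $ j) / \<gamma> j - gradf xstar $ j"
      unfolding E_def using gp
      by (intro tendsto_diff[OF tendsto_divide[OF tendsto_diff[OF tendsto_vec_nth[OF Zlim] tendsto_const] tendsto_const] tendsto_vec_nth[OF glim]]) simp
    then have "E \<longlonglongrightarrow> u $ j" by (simp add: u_def)
    then have "eventually (\<lambda>k. dist (E k) (u $ j) < e) sequentially" using e(1) by (rule tendstoD)
    then show ?thesis
    proof (rule eventually_mono)
      fix k assume "dist (E k) (u $ j) < e"
      then have sd: "E k \<in> subdiff (G j) (xstar $ j)" using e(2) by (simp add: dist_real_def)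
      have "((Z k $ j - \<gamma> j * gradf (Z k) $ j) - xstar $ j) / \<gamma> j = E k"
        using gp by (simp add: E_def field_simps)
      then have "prox (\<gamma> j) (G j) (Z k $ j - \<gamma> j * gradf (Z k) $ j) = xstar $ j"
        using prox_eq[OF gp minf, of "Z k $ j - \<gamma> j * gradf (Z k) $ j" "xstar $ j"] sd by simp
      then show "xs (Suc k) $ j = xstar $ j" using Z(2)[of k] by (simp add: cd_update_nth)
    qed
  qed
  have "eventually (\<lambda>k. \<forall>j\<in>- gen_support G xstar. xs (Suc k) $ j = xstar $ j) sequentially"
    using ev by (intro eventually_ball_finite) auto
  then obtain N where N: "\<And>k. k \<ge> N \<Longrightarrow> \<forall>j\<in>- gen_support G xstar. xs (Suc k) $ j = xstar $ j"
    by (auto simp: eventually_sequentially)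
  show ?thesis
  proof (intro exI[of _ "Suc N"] conjI allI impI)
    fix k assume "Suc N \<le> k"
    then obtain m where "k = Suc m" "m \<ge> N" by (metis Suc_le_D Suc_le_mono)
    then show "\<forall>j\<in>- gen_support G xstar. xs k $ j = xstar $ j" using N by simp
  qed simp
qed

end
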